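(* Let $\mathbf{C}=\mathbf{C}_1\,\dot\cup\,\mathbf{C}_2$ and $\mathbf{B}\in\dot{\mathbb{P}}(\mathbb{L}(\mathbf{C}_1))$ with $|\mathbf{B}|=|\mathbf{C}_1|$. Suppose every variable $X\in\mathbf{C}_2$ has a positive monotonic effect on $D$ relative to $\mathbf{C}$. If for some $\omega^*\in\Omega$ (i) $D_{\mathbf{B}=\mathbf{1},\mathbf{C}_2=\mathbf{0}}(\omega^* )=1$ and (ii) for all $L\in\mathbf{B}$, $D_{\mathbf{B}\setminus\{L\}=\mathbf{1},L=0,\mathbf{C}_2=\mathbf{0}}(\omega^* )=0$, then $\mathbf{B}$ is a minimal sufficient cause for $D$ relative to $\mathbf{C}$ for $\omega^*$.
   Context: Events are binary random variables on a population $\Omega$; $\overline{X}=1-X$; $\mathbb{L}(\mathbf{C})=\mathbf{C}\cup\{\overline{X}:X\in\mathbf{C}\}$; $\dot{\mathbb{P}}(\mathbb{L}(\mathbf{C}))$ is the set of subsets of $\mathbb{L}(\mathbf{C})$ not containing both $X$ and $\overline{X}$; $(L)_{\mathbf{c}}$ is the value of literal $L$ under assignment $\mathbf{c}$; $\bigwedge(\mathbf{B})=\min_{L\in\mathbf{B}}L$. Potential outcomes $D_{\mathbf{c}}(\omega)\in\{0,1\}$. Since $|\mathbf{B}|=|\mathbf{C}_1|$, setting literals of $\mathbf{B}$ determines an assignment to $\mathbf{C}_1$. A variable $X\in\mathbf{C}$ has a positive monotonic effect on $D$ relative to $\mathbf{C}$ if for all $\omega$ and all values of the other variables of $\mathbf{C}$,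 the potential outcome with $X=1$ is at least that with $X=0$. $\mathbf{B}\subseteq\mathbb{L}(\mathbf{C})$ is a sufficient cause for $D$ relative to $\mathbf{C}$ for $\omega^*$ if some $\mathbf{c}^*$ has $(\bigwedge(\mathbf{B}))_{\mathbf{c}^*}=1$ and $D_{\mathbf{c}}(\omega^* )=1$ for every $\mathbf{c}$ with $(\bigwedge(\mathbf{B}))_{\mathbf{c}}=1$; it is minimal if no proper subset of $\mathbf{B}$ is a sufficient cause for $D$ relative to $\mathbf{C}$ for $\omega^*$. *)

theory Defs
  imports Main
begin

text \<open>Potential outcomes:
  D :: 'w => ('v => bool) => bool, where D w c is D_c(w) (True = 1).\<close>

datatype 'v lit = Pos 'v | Neg 'v

fun lit_var :: "'v lit \<Rightarrow> 'v" where
  "lit_var (Pos x) = x" | "lit_var (Neg x) = x"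

fun lit_neg :: "'v lit \<Rightarrow> 'v lit" where
  "lit_neg (Pos x) = Neg x" | "lit_neg (Neg x) = Pos x"

fun lit_val :: "('v \<Rightarrow> bool) \<Rightarrow> 'v lit \<Rightarrow> bool" where
  "lit_val c (Pos x) = c x" | "lit_val c (Neg x) = (\<not> c x)"

definition lits :: "'v set \<Rightarrow> 'v lit set" where
  "lits C = Pos ` C \<union> Neg ` C"

definition consistent :: "'v lit set \<Rightarrow> bool" where
  "consistent B \<longleftrightarrow> (\<forall>x. \<not> (Pos x \<in> B \<and> Neg x \<in> B))"

definition assignments :: "'v set \<Rightarrow> ('v \<Rightarrow> bool) set" where
  "assignments C = {c. \<forall>x. x \<notin> C \<longrightarrow> c x = False}"

definition conj_val :: "'v lit set \<Rightarrow> ('v \<Rightarrow> bool) \<Rightarrow> bool" where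
  "conj_val B c \<longleftrightarrow> (\<forall>L\<in>B. lit_val c L)"

text \<open>Assignment setting all literals in S to 1 and every other variable to 0.\<close>
definition assign_lits :: "'v lit set \<Rightarrow> ('v \<Rightarrow> bool)" where
  "assign_lits S = (\<lambda>x. Pos x \<in> S)"

definition pos_monotonic :: "'v set \<Rightarrow> ('w \<Rightarrow> ('v \<Rightarrow> bool) \<Rightarrow> bool) \<Rightarrow> 'v \<Rightarrow> bool" where
  "pos_monotonic C D X \<longleftrightarrow>
     (\<forall>w. \<forall>c \<in> assignments C. D w (c(X := False)) \<longrightarrow> D w (c(X := True)))"

definition sufficient_cause ::
  "'v set \<Rightarrow> ('w \<Rightarrow> ('v \<Rightarrow> bool) \<Rightarrow> bool) \<Rightarrow> 'w \<Rightarrow> 'v lit set \<Rightarrow> bool" where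
  "sufficient_cause C D w B \<longleftrightarrow>
     (\<exists>c \<in> assignments C. conj_val B c) \<and>
     (\<forall>c \<in> assignments C. conj_val B c \<longrightarrow> D w c)"

definition minimal_sufficient_cause ::
  "'v set \<Rightarrow> ('w \<Rightarrow> ('v \<Rightarrow> bool) \<Rightarrow> bool) \<Rightarrow> 'w \<Rightarrow> 'v lit set \<Rightarrow> bool" where
  "minimal_sufficient_cause C D w B \<longleftrightarrow>
     sufficient_cause C D w B \<and> (\<forall>B'. B' \<subset> B \<longrightarrow> \<not> sufficient_cause C D w B')"

end

theory Submission
  imports Defs
begin

theorem mainTheorem9:
  fixes C C1 C2 :: "'v set" and B :: "'v lit set"
    and D :: "'w \<Rightarrow> ('v \<Rightarrow> bool) \<Rightarrow> bool" and w :: 'w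
  assumes "finite C" and "C = C1 \<union> C2" and "C1 \<inter> C2 = {}"
    and "B \<subseteq> lits C1" and "consistent B" and "card B = card C1"
    and "\<forall>X\<in>C2. pos_monotonic C D X"
    and "D w (assign_lits B)"
    and "\<forall>L\<in>B. \<not> D w (assign_lits (insert (lit_neg L) (B - {L})))"
  shows "minimal_sufficient_cause C D w B"
proof -
  note a = assms
  have fC1: "finite C1" and fC2: "finite C2" using a(1,2) by auto
  have fB: "finite B" using a(4) fC1 unfolding lits_def
    by (meson finite_Un finite_imageI finite_subset)
  have injv: "inj_on lit_var B"
  proof (rule inj_onI)
    fix L M assume "L \<in> B" "M \<in> B" "lit_var L = lit_var M"
    then show "L = M" using a(5) unfolding consistent_def
      by (cases L; cases M) auto
  qed
  have sub: "lit_var ` B \<subseteq> C1" using a(4) unfolding lits_def by auto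
  have cov: "lit_var ` B = C1"
    using card_subset_eq[OF fC1 sub] card_image[OF injv] a(6) by simp
  have cov2: "\<And>x. x \<in> C1 \<Longrightarrow> Pos x \<in> B \<or> Neg x \<in> B"
  proof -
    fix x assume "x \<in> C1"
    then obtain L where "L \<in> B" "lit_var L = x" using cov by force
    then show "Pos x \<in> B \<or> Neg x \<in> B" by (cases L) auto
  qed
  have posC1: "\<And>x. Pos x \<in> B \<Longrightarrow> x \<in> C1" using a(4) unfolding lits_def by auto
  have negC1: "\<And>x. Neg x \<in> B \<Longrightarrow> x \<in> C1" using a(4) unfolding lits_def by auto
  define f where "f S = (\<lambda>x. if x \<in> C2 then x \<in> S else assign_lits B x)" for S
  have fa: "f S \<in> assignments C" if "S \<subseteq> C2" for S
    using that posC1 a(2) unfolding f_def assignments_def assign_lits_def by auto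
  have ind: "S \<subseteq> C2 \<Longrightarrow> D w (f S)" for S
  proof -
    assume "S \<subseteq> C2"
    have "finite S" using \<open>S \<subseteq> C2\<close> fC2 finite_subset by blast
    then show ?thesis using \<open>S \<subseteq> C2\<close>
    proof (induction S rule: finite_induct)
      case empty
      have "f {} = assign_lits B"
        using posC1 a(3) unfolding f_def assign_lits_def by (auto intro!: ext)
      then show ?case using a(8) by simp
    next
      case (insert x S)
      have xC2: "x \<in> C2" using insert by auto
      have m: "pos_monotonic C D x" using a(7) xC2 by auto
      have "f S \<in> assignments C" using fa insert by auto
      moreover have "(f S)(x := False) = f S" using insert(2) xC2 unfolding f_def by (auto intro!: ext split: if_splits)
      moreover have "(f S)(x := True) = f (insert x S)" proof
        fix y show "((f S)(x := True)) y = f (insert x S) y" using xC2 unfolding f_def by (cases "y = x") auto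
      qed
      moreover have "D w (f S)" using insert by auto
      ultimately show ?case using m unfolding pos_monotonic_def by (metis (no_types))
    qed
  qed
  have suff: "sufficient_cause C D w B"
    unfolding sufficient_cause_def
  proof (intro conjI ballI impI)
    show "\<exists>c\<in>assignments C. conj_val B c"
    proof (rule bexI[of _ "assign_lits B"])
      show "assign_lits B \<in> assignments C"
        using posC1 a(2) unfolding assignments_def assign_lits_def by auto
      show "conj_val B (assign_lits B)"
        unfolding conj_val_def assign_lits_def
      proof
        fix L assume "L \<in> B" then show "lit_val (\<lambda>x. Pos x \<in> B) L"
          using a(5) unfolding consistent_def by (cases L) auto
      qed
    qed
  next
    fix c assume c: "c \<in> assignments C" "conj_val B c"
    have "c = f {x \<in> C2. c x}"
    proof
      fix x show "c x = f {x \<in> C2. c x} x"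
      proof (cases "x \<in> C2")
        case True then show ?thesis unfolding f_def by auto
      next
        case False
        show ?thesis
        proof (cases "x \<in> C1")
          case True
          then have "Pos x \<in> B \<or> Neg x \<in> B" using cov2 by auto
          then show ?thesis using False c(2) a(5) unfolding f_def assign_lits_def conj_val_def consistent_def
            by force
        next
          case F2: False
          then have "c x = False" using c(1) False a(2) unfolding assignments_def by auto
          then show ?thesis using False F2 posC1 unfolding f_def assign_lits_def by auto
        qed
      qed
    qed
    then show "D w c" using ind[of "{x \<in> C2. c x}"] by auto
  qed
  have minl: "\<not> sufficient_cause C D w B'" if psub: "B' \<subset> B" for B'
  proof
    assume s: "sufficient_cause C D w B'"
    obtain L where L: "L \<in> B" "L \<notin> B'" using psub by blast
    define g where "g = assign_lits (insert (lit_neg L) (B - {L}))"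
    have gA: "g \<in> assignments C"
      using posC1 negC1 L(1) a(2) unfolding g_def assignments_def assign_lits_def
      by (cases L) auto
    have "conj_val B' g"
      unfolding conj_val_def
    proof
      fix M assume "M \<in> B'"
      then have M: "M \<in> B" "M \<noteq> L" using psub L by auto
      have "lit_var M \<noteq> lit_var L" using injv M L(1) by (meson inj_onD)
      then show "lit_val g M" using M L(1) a(5) unfolding g_def assign_lits_def consistent_def
        by (cases M; cases L) auto
    qed
    then have "D w g" using s gA unfolding sufficient_cause_def by auto
    then show False using a(9) L(1) unfolding g_def by auto
  qed
  show ?thesis unfolding minimal_sufficient_cause_def using suff minl by auto
qed

end
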